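(* Consider a convolutional arithmetic circuit (as described in the context) with fixed architecture, and let $\mathcal{A}^y$ be the coefficient tensor of its output node $y$, viewed as a function of the network's linear weights $\{\mathbf{a}^{l,\gamma}\}_{l,\gamma}$ and $\mathbf{a}^{L,y}$ (all ranging over the corresponding real Euclidean spaces). Then for any partition $(I,J)$ of $[N]$, the function mapping the weights to $\operatorname{rank}[\![\mathcal{A}^y]\!]_{I,J}$ attains its maximum almost everywhere with respect to Lebesgue measure on the weight space.
   Context: Convolutional arithmetic circuit: the input is $X=(\mathbf{x}_1,\ldots,\mathbf{x}_N)\in(\mathbb{R}^s)^N$. The representation layer computes $\mathrm{rep}(i,d)=f_d(\mathbf{x}_i)$ for $i\in[N]$, $d\in[M]$, with fixed functions $f_d:\mathbb{R}^s\to\mathbb{R}$. There are hidden layers $l=0,\ldots,L-1$. Hidden layer $l$ has $r_l$ channels; it first applies a $1\times1$ convolution $\mathrm{conv}(l,j,\gamma)=\sum_{\alpha}a^{l,\gamma}_\alpha\,\mathrm{prev}(j,\alpha)$ at each spatial location $j$ of the previous layer (weights $\mathbf{a}^{0,\gamma}\in\mathbb{R}^M$, $\mathbf{a}^{l,\gamma}\in\mathbb{R}^{r_{l-1}}$ for $l\ge1$, $\gamma\in[r_l]$, shared across locations), and then product pooling: locations are partitioned into non-overlapping windows (the same for all channels) and window $w$ yields $\mathrm{pool}(l,w,\gamma)=\prod_{j\in w}\mathrm{conv}(l,j,\gamma)$. The last hidden layer's pooling is global, producing a vector in $\mathbb{R}^{r_{L-1}}$, and output node $y$ computes $\sum_\alpha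 a^{L,y}_\alpha\,\mathrm{pool}(L-1,\cdot,\alpha)$ with $\mathbf{a}^{L,y}\in\mathbb{R}^{r_{L-1}}$. The coefficient tensor $\mathcal{A}^y$ is the order-$N$ tensor with dimension $M$ in each mode whose entry $\mathcal{A}^y_{d_1\ldots d_N}$ is the value of output $y$ when the representation layer is replaced by $\mathrm{rep}(i,d)=1$ if $d=d_i$ and $0$ otherwise (so its entries are polynomials in the weights, and $h_y(X)=\sum_{d_1..d_N}\mathcal{A}^y_{d_1\ldots d_N}\prod_i f_{d_i}(\mathbf{x}_i)$). Matricization: for a tensor $\mathcal{A}$ of order $N$ with dimension $M$ in each mode and a partition $(I,J)$ of $[N]$ with $I=\{i_1<\cdots<i_{|I|}\}$, $J=\{j_1<\cdots<j_{|J|}\}$, $[\![\mathcal{A}]\!]_{I,J}$ is the $M^{|I|}\times M^{|J|}$ matrix holding $\mathcal{A}_{d_1\ldots d_N}$ in row $1+\sum_{t}(d_{i_t}-1)M^{|I|-t}$ and column $1+\sum_t(d_{j_t}-1)M^{|J|-t}$. *)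

theory Defs
  imports "HOL-Analysis.Analysis" "Jordan_Normal_Form.DL_Rank"
begin

text \<open>
Conventions (all indices 0-based):
  input locations i < N, representation functions d < M;
  hidden layers l < L with r l channels;
  nloc l = number of spatial locations entering hidden layer l (nloc 0 = N),
  pw l j = index of the pooling window of layer l containing location j,
  windows of layer l are the locations of layer l+1 (nloc L = 1: global pooling).
  Weights: w (l, g, a) = a^{l,g}_a for l < L, and w (L, 0, a) = a^{L,y}_a.
\<close>

definition cac_din :: "nat \<Rightarrow> (nat \<Rightarrow> nat) \<Rightarrow> nat \<Rightarrow> nat" where
  "cac_din M r l = (if l = 0 then M else r (l - 1))"

fun cac_pool :: "nat \<Rightarrow> (nat \<Rightarrow> nat) \<Rightarrow> (nat \<Rightarrow> nat) \<Rightarrow> (nat \<Rightarrow> nat \<Rightarrow> nat)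
    \<Rightarrow> (nat \<times> nat \<times> nat \<Rightarrow> real) \<Rightarrow> (nat \<Rightarrow> nat \<Rightarrow> real) \<Rightarrow> nat \<Rightarrow> nat \<Rightarrow> nat \<Rightarrow> real" where
  "cac_pool M r nloc pw w rep 0 wi g =
     (\<Prod>j\<in>{j. j < nloc 0 \<and> pw 0 j = wi}. \<Sum>a<M. w (0, g, a) * rep j a)"
| "cac_pool M r nloc pw w rep (Suc l) wi g =
     (\<Prod>j\<in>{j. j < nloc (Suc l) \<and> pw (Suc l) j = wi}.
        \<Sum>a<r l. w (Suc l, g, a) * cac_pool M r nloc pw w rep l j a)"

definition cac_output :: "nat \<Rightarrow> nat \<Rightarrow> (nat \<Rightarrow> nat) \<Rightarrow> (nat \<Rightarrow> nat) \<Rightarrow> (nat \<Rightarrow> nat \<Rightarrow> nat)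
    \<Rightarrow> (nat \<times> nat \<times> nat \<Rightarrow> real) \<Rightarrow> (nat \<Rightarrow> nat \<Rightarrow> real) \<Rightarrow> real" where
  "cac_output M L r nloc pw w rep =
     (\<Sum>a<r (L - 1). w (L, 0, a) * cac_pool M r nloc pw w rep (L - 1) 0 a)"

definition coeff_tensor :: "nat \<Rightarrow> nat \<Rightarrow> (nat \<Rightarrow> nat) \<Rightarrow> (nat \<Rightarrow> nat) \<Rightarrow> (nat \<Rightarrow> nat \<Rightarrow> nat)
    \<Rightarrow> (nat \<times> nat \<times> nat \<Rightarrow> real) \<Rightarrow> (nat \<Rightarrow> nat) \<Rightarrow> real" where
  "coeff_tensor M L r nloc pw w d =
     cac_output M L r nloc pw w (\<lambda>i e. if e = d i then 1 else 0)"

definition cac_weight_idx :: "nat \<Rightarrow> nat \<Rightarrow> (nat \<Rightarrow> nat) \<Rightarrow> (nat \<times> nat \<times> nat) set" where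
  "cac_weight_idx M L r =
     {(l, g, a). l < L \<and> g < r l \<and> a < cac_din M r l} \<union> {(l, g, a). l = L \<and> g = 0 \<and> a < r (L - 1)}"

text \<open>Digit of mixed-radix index k (most significant first): the t-th (0-based) element
  of the sorted set S gets digit (k div M^(|S|-1-t)) mod M.\<close>
definition mat_index_digit :: "nat \<Rightarrow> nat set \<Rightarrow> nat \<Rightarrow> nat \<Rightarrow> nat" where
  "mat_index_digit M S k i =
     (let t = (THE t. t < card S \<and> sorted_list_of_set S ! t = i)
      in (k div M ^ (card S - 1 - t)) mod M)"

definition matricize :: "nat \<Rightarrow> nat set \<Rightarrow> nat set \<Rightarrow> ((nat \<Rightarrow> nat) \<Rightarrow> real) \<Rightarrow> real mat" where
  "matricize M I J A =
     mat (M ^ card I) (M ^ card J)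
       (\<lambda>(rw, cl). A (\<lambda>i. if i \<in> I then mat_index_digit M I rw i else mat_index_digit M J cl i))"

definition real_mat_rank :: "real mat \<Rightarrow> nat" where
  "real_mat_rank A = vec_space.rank (dim_row A) A"

end

theory Submission
  imports Defs
begin


inductive pf :: "(('i \<Rightarrow> real) \<Rightarrow> real) \<Rightarrow> bool" where
  pf_const: "pf (\<lambda>x. c)"
| pf_var: "pf (\<lambda>x. x i)"
| pf_add: "pf f \<Longrightarrow> pf g \<Longrightarrow> pf (\<lambda>x. f x + g x)"
| pf_mult: "pf f \<Longrightarrow> pf g \<Longrightarrow> pf (\<lambda>x. f x * g x)"

lemma pf_sum: "(\<And>a. a \<in> A \<Longrightarrow> pf (f a)) \<Longrightarrow> pf (\<lambda>x. \<Sum>a\<in>A. f a x)"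
proof (cases "finite A")
  case True
  show "(\<And>a. a \<in> A \<Longrightarrow> pf (f a)) \<Longrightarrow> ?thesis" using True
    by (induction A rule: finite_induct) (auto intro: pf.intros)
next
  case False then show ?thesis by (simp add: pf_const)
qed

lemma pf_prod: "(\<And>a. a \<in> A \<Longrightarrow> pf (f a)) \<Longrightarrow> pf (\<lambda>x. \<Prod>a\<in>A. f a x)"
proof (cases "finite A")
  case True
  show "(\<And>a. a \<in> A \<Longrightarrow> pf (f a)) \<Longrightarrow> ?thesis" using True
    by (induction A rule: finite_induct) (auto intro: pf.intros)
next
  case False then show ?thesis by (simp add: pf_const)
qed

lemma pf_measurable:
  assumes "pf p" shows "p \<in> borel_measurable (PiM S (\<lambda>_. lborel))"
  using assms
proof induction
  case (pf_var i)
  show ?case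
  proof (cases "i \<in> S")
    case True then show ?thesis by (auto intro: measurable_component_singleton)
  next
    case False
    have "(\<lambda>x. undefined::real) \<in> borel_measurable (PiM S (\<lambda>_. lborel))" by simp
    then show ?thesis
      by (rule measurable_cong[THEN iffD1, rotated]) (use False in \<open>auto simp: space_PiM PiE_def extensional_def\<close>)
  qed
qed auto

lemma pf_upd: "pf p \<Longrightarrow> pf (\<lambda>y. p (y(i:=t)))"
proof (induction rule: pf.induct)
  case (pf_var j)
  show ?case by (cases "j = i") (auto intro: pf.intros)
qed (auto intro: pf.intros)

lemma pf_univ: "pf p \<Longrightarrow> \<exists>q. \<forall>t. p (y(i:=t)) = poly q t"
proof (induction rule: pf.induct)
  case (pf_const c)
  show ?case by (rule exI[of _ "[:c:]"]) simp
next
  case (pf_var j)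
  show ?case
  proof (cases "j = i")
    case True then show ?thesis by (intro exI[of _ "[:0,1:]"]) simp
  next
    case False then show ?thesis by (intro exI[of _ "[:y j:]"]) simp
  qed
next
  case (pf_add f g)
  then obtain q1 q2 where "\<forall>t. f (y(i:=t)) = poly q1 t" "\<forall>t. g (y(i:=t)) = poly q2 t" by blast
  then show ?case by (intro exI[of _ "q1 + q2"]) (metis poly_add)
next
  case (pf_mult f g)
  then obtain q1 q2 where "\<forall>t. f (y(i:=t)) = poly q1 t" "\<forall>t. g (y(i:=t)) = poly q2 t" by blast
  then show ?case by (intro exI[of _ "q1 * q2"]) (metis poly_mult)
qed

lemma pf_zero_null:
  assumes "finite S" "pf p" "x0 \<in> space (PiM S (\<lambda>_. lborel))" "p x0 \<noteq> 0"
  shows "{x \<in> space (PiM S (\<lambda>_. lborel)). p x = 0} \<in> null_sets (PiM S (\<lambda>_. lborel))"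
  using assms(1,2,3,4)
proof (induction S arbitrary: p x0 rule: finite_induct)
  case empty
  have E: "{x \<in> space (PiM {} (\<lambda>_. lborel)). p x = 0} = {}" using empty by (auto simp: space_PiM)
  show ?case unfolding E by simp
next
  case (insert i I)
  interpret product_sigma_finite "\<lambda>_. lborel" by standard
  let ?P = "PiM (insert i I) (\<lambda>_. lborel)"
  let ?Z = "{x \<in> space ?P. p x = 0}"
  have pm: "p \<in> borel_measurable ?P" using pf_measurable[OF insert.prems(1)] .
  have Zs: "?Z \<in> sets ?P" using pm by measurable
  have im: "indicator ?Z \<in> borel_measurable ?P" using Zs by simp
  define t0 where "t0 = x0 i"
  define q where "q = (\<lambda>y. p (y(i:=t0)))"
  have pq: "pf q" unfolding q_def by (rule pf_upd[OF insert.prems(1)])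
  define y0 where "y0 = restrict x0 I"
  have y0s: "y0 \<in> space (PiM I (\<lambda>_. lborel))" unfolding y0_def by (auto simp: space_PiM)
  have "y0(i:=t0) = x0"
    using insert.prems(2) insert.hyps(2) unfolding y0_def t0_def
    by (auto simp: space_PiM PiE_def extensional_def fun_eq_iff)
  then have qy0: "q y0 \<noteq> 0" using insert.prems(3) unfolding q_def by simp
  have N0: "{y \<in> space (PiM I (\<lambda>_. lborel)). q y = 0} \<in> null_sets (PiM I (\<lambda>_. lborel))"
    by (rule insert.IH[OF pq y0s qy0])
  have AE0: "AE y in PiM I (\<lambda>_. lborel). (\<integral>\<^sup>+ t. indicator ?Z (y(i:=t)) \<partial>lborel) = 0"
    using AE_not_in[OF N0]
  proof (rule AE_mp[OF _ AE_I2])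
    fix y :: "_ \<Rightarrow> real" assume ys: "y \<in> space (PiM I (\<lambda>_. lborel))"
    show "y \<notin> {y \<in> space (PiM I (\<lambda>_. lborel)). q y = 0} \<longrightarrow> (\<integral>\<^sup>+ t. indicator ?Z (y(i:=t)) \<partial>lborel) = 0"
    proof
      assume "y \<notin> {y \<in> space (PiM I (\<lambda>_. lborel)). q y = 0}"
      with ys have qy: "q y \<noteq> 0" by simp
      obtain qq where qq: "\<forall>t. p (y(i:=t)) = poly qq t" using pf_univ[OF insert.prems(1)] by blast
      have "poly qq t0 \<noteq> 0" using qy qq unfolding q_def by metis
      then have "qq \<noteq> 0" by auto
      then have fin: "finite {t. poly qq t = 0}" by (rule poly_roots_finite)
      have "\<And>t. y(i:=t) \<in> space ?P" using ys by (auto simp: space_PiM PiE_def extensional_def)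
      then have "\<And>t. indicator ?Z (y(i:=t)) = (indicator {t. poly qq t = 0} t :: ennreal)"
        using qq by (auto simp: indicator_def)
      then have "(\<integral>\<^sup>+ t. indicator ?Z (y(i:=t)) \<partial>lborel) = (\<integral>\<^sup>+ t. indicator {t. poly qq t = 0} t \<partial>lborel)"
        by simp
      also have "\<dots> = 0"
        using finite_imp_null_set_lborel[OF fin] by (metis nn_integral_indicator null_setsD1 null_setsD2)
      finally show "(\<integral>\<^sup>+ t. indicator ?Z (y(i:=t)) \<partial>lborel) = 0" .
    qed
  qed
  have "emeasure ?P ?Z = (\<integral>\<^sup>+ x. indicator ?Z x \<partial>?P)"
    using Zs by simp
  also have "\<dots> = (\<integral>\<^sup>+ y. (\<integral>\<^sup>+ t. indicator ?Z (y(i:=t)) \<partial>lborel) \<partial>(PiM I (\<lambda>_. lborel)))"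
    by (rule product_nn_integral_insert[OF insert.hyps(1,2) im])
  also have "\<dots> = (\<integral>\<^sup>+ y. 0 \<partial>(PiM I (\<lambda>_. lborel :: real measure)))"
    using AE0 by (rule nn_integral_cong_AE)
  also have "\<dots> = 0" by simp
  finally show ?case using Zs by auto
qed



lemma pf_det:
  assumes "\<And>w. F w \<in> carrier_mat n n" "\<And>i j. i < n \<Longrightarrow> j < n \<Longrightarrow> pf (\<lambda>w. F w $$ (i,j))"
  shows "pf (\<lambda>w. det (F w))"
proof -
  have eq: "(\<lambda>w. det (F w)) = (\<lambda>w. \<Sum> p \<in> {p. p permutes {0 ..< n}}. signof p * (\<Prod> i = 0 ..< n. F w $$ (i, p i)))"
    using det_def'[OF assms(1)] by auto
  have "pf (\<lambda>w. \<Sum> p \<in> {p. p permutes {0 ..< n}}. signof p * (\<Prod> i = 0 ..< n. F w $$ (i, p i)))"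
  proof (intro pf_sum pf_mult pf_const pf_prod)
    fix p i assume "p \<in> {p. p permutes {0..<n}}" "i \<in> {0..<n}"
    then have "p i < n" by (auto dest: permutes_in_image)
    then show "pf (\<lambda>w. F w $$ (i, p i))" using assms(2) \<open>i \<in> {0..<n}\<close> by auto
  qed
  then show ?thesis unfolding eq .
qed

lemma gram_kernel:
  fixes B :: "real mat"
  assumes B: "B \<in> carrier_mat n R" and v: "v \<in> carrier_vec R"
    and G: "(transpose_mat B * B) *\<^sub>v v = 0\<^sub>v R"
  shows "B *\<^sub>v v = 0\<^sub>v n"
proof -
  have Bv: "B *\<^sub>v v \<in> carrier_vec n" using B v by auto
  have "(transpose_mat B *\<^sub>v (B *\<^sub>v v)) = 0\<^sub>v R" using G B v by simp
  then have "(transpose_mat B *\<^sub>v (B *\<^sub>v v)) \<bullet> v = 0" using v by simp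
  then have "(B *\<^sub>v v) \<bullet> (B *\<^sub>v v) = 0" using transpose_vec_mult_scalar[OF B v Bv] by simp
  moreover have dv: "dim_vec (B *\<^sub>v v) = n" using B by auto
  ultimately have "(\<Sum>i\<in>{0..<n}. (B *\<^sub>v v) $ i * (B *\<^sub>v v) $ i) = 0" unfolding scalar_prod_def by simp
  then have "\<forall>i\<in>{0..<n}. (B *\<^sub>v v) $ i * (B *\<^sub>v v) $ i = 0"
    by (subst sum_nonneg_eq_0_iff[symmetric]) auto
  then show ?thesis using Bv B by (intro eq_vecI) auto
qed

lemma mat_vec_unit:
  fixes B :: "'a :: semiring_1 mat"
  assumes B: "B \<in> carrier_mat n R" and k: "k < R"
  shows "B *\<^sub>v unit_vec R k = col B k"
  using B k by (intro eq_vecI) (auto simp: col_def)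

lemma rank_witness:
  fixes A :: "('i \<Rightarrow> real) \<Rightarrow> real mat"
  assumes carr: "\<And>w. A w \<in> carrier_mat n nc"
    and ent: "\<And>i j. i < n \<Longrightarrow> j < nc \<Longrightarrow> pf (\<lambda>w. A w $$ (i,j))"
  shows "\<exists>F. pf F \<and> F w0 \<noteq> 0 \<and> (\<forall>w. F w \<noteq> 0 \<longrightarrow> vec_space.rank n (A w0) \<le> vec_space.rank n (A w))"
proof -
  interpret vec_space "TYPE(real)" n .
  let ?P = "\<lambda>T. T \<subseteq> set (cols (A w0)) \<and> lin_indpt T"
  obtain S where max: "maximal S ?P"
    using maximal_exists[of ?P "card (set (cols (A w0)))" "{}"]
    by (meson List.finite_set card_mono empty_iff empty_subsetI finite_lin_indpt2 rev_finite_subset)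
  have rk: "rank (A w0) = card S" by (rule rank_card_indpt[OF carr max])
  have SP: "S \<subseteq> set (cols (A w0))" "lin_indpt S" using max unfolding maximal_def by auto
  have "finite S" using SP(1) finite_subset by blast
  then obtain ss where ss: "set ss = S" "distinct ss" using finite_distinct_list by blast
  define R where "R = length ss"
  have RS: "R = card S" using ss distinct_card unfolding R_def by metis
  define js where "js = map (\<lambda>s. SOME j. j < nc \<and> col (A w0) j = s) ss"
  have js: "js ! k < nc \<and> col (A w0) (js ! k) = ss ! k" if k: "k < R" for k
  proof -
    have "ss ! k \<in> set (cols (A w0))" using SP(1) ss(1) k R_def nth_mem by blast
    then have "\<exists>j. j < nc \<and> col (A w0) j = ss ! k" using carr[of w0] unfolding cols_def by auto
    then have "(SOME j. j < nc \<and> col (A w0) j = ss ! k) < nc \<and> col (A w0) (SOME j. j < nc \<and> col (A w0) j = ss ! k) = ss ! k"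
      by (rule someI_ex)
    then show ?thesis unfolding js_def using k R_def by simp
  qed
  define B where "B w = mat n R (\<lambda>(i,k). A w $$ (i, js ! k))" for w
  define G where "G w = transpose_mat (B w) * B w" for w
  define F where "F w = det (G w)" for w
  have Bc: "B w \<in> carrier_mat n R" for w unfolding B_def by simp
  have Gc: "G w \<in> carrier_mat R R" for w unfolding G_def using Bc[of w] by (intro mult_carrier_mat[of _ R n]) auto
  have colB: "col (B w) k = col (A w) (js ! k)" if "k < R" for w k
    using that carr[of w] unfolding B_def by (intro eq_vecI) (auto simp: col_def)
  have colsB: "cols (B w) = map (\<lambda>k. col (A w) (js!k)) [0..<R]" for w
    using Bc[of w] colB by (intro nth_equalityI) auto
  have colsB0: "cols (B w0) = ss"
    using colsB[of w0] js R_def by (intro nth_equalityI) auto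
  have Gent: "G w $$ (k,l) = (\<Sum>i\<in>{0..<n}. A w $$ (i, js!k) * A w $$ (i, js!l))"
    if "k < R" "l < R" for w k l
    using that Bc[of w] unfolding G_def by (simp add: scalar_prod_def B_def)
  have pfF: "pf F" unfolding F_def
  proof (rule pf_det[OF Gc])
    fix k l assume kl: "k < R" "l < R"
    show "pf (\<lambda>w. G w $$ (k, l))" unfolding Gent[OF kl]
      using js kl by (intro pf_sum pf_mult ent) auto
  qed
  have F0: "F w0 \<noteq> 0"
  proof
    assume "F w0 = 0"
    then obtain v where v: "v \<in> carrier_vec R" "v \<noteq> 0\<^sub>v R" "G w0 *\<^sub>v v = 0\<^sub>v R"
      using det_0_iff_vec_prod_zero[OF Gc] F_def by auto
    then have "B w0 *\<^sub>v v = 0\<^sub>v n" using gram_kernel[OF Bc v(1)] G_def by auto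
    then have "lin_dep (set (cols (B w0)))" using lin_depI[OF Bc v(1,2)] colsB0 ss(2) by auto
    then show False using SP(2) colsB0 ss(1) by simp
  qed
  have Fw: "rank (A w0) \<le> rank (A w)" if Fw: "F w \<noteq> 0" for w
  proof -
    have ker: "v = 0\<^sub>v R" if v: "v \<in> carrier_vec R" "B w *\<^sub>v v = 0\<^sub>v n" for v
    proof (rule ccontr)
      assume nz: "v \<noteq> 0\<^sub>v R"
      have "G w *\<^sub>v v = transpose_mat (B w) *\<^sub>v (B w *\<^sub>v v)" unfolding G_def using v Bc[of w] by (intro assoc_mult_mat_vec[of _ R n _ R]) auto
      also have "\<dots> = 0\<^sub>v R" using v Bc[of w] by (intro eq_vecI) (auto simp: scalar_prod_def)
      finally have "det (G w) = 0" using det_0_iff_vec_prod_zero[OF Gc] v nz by auto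
      then show False using Fw F_def by simp
    qed
    have dist: "distinct (cols (B w))"
    proof (rule ccontr)
      assume "\<not> distinct (cols (B w))"
      then obtain k l where kl: "k < R" "l < R" "k \<noteq> l" "cols (B w) ! k = cols (B w) ! l"
        using Bc[of w] by (auto simp: distinct_conv_nth)
      define v :: "real vec" where "v = unit_vec R k - unit_vec R l"
      have vc: "v \<in> carrier_vec R" unfolding v_def by simp
      have "v $ k = 1" unfolding v_def using kl by simp
      then have "v \<noteq> 0\<^sub>v R" using kl by auto
      moreover have "B w *\<^sub>v v = 0\<^sub>v n"
      proof -
        have "B w *\<^sub>v v = B w *\<^sub>v unit_vec R k - B w *\<^sub>v unit_vec R l"
          unfolding v_def by (rule mult_minus_distrib_mat_vec[OF Bc]) auto
        also have "\<dots> = col (B w) k - col (B w) l" using mat_vec_unit[OF Bc] kl by simp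
        also have "\<dots> = 0\<^sub>v n" using kl Bc[of w] by (intro eq_vecI) auto
        finally show ?thesis .
      qed
      ultimately show False using ker[OF vc] by simp
    qed
    have indpt: "lin_indpt (set (cols (B w)))"
    proof
      assume "lin_dep (set (cols (B w)))"
      from lin_depE[OF Bc this dist] obtain v where "v \<in> carrier_vec R" "v \<noteq> 0\<^sub>v R" "B w *\<^sub>v v = 0\<^sub>v n" .
      then show False using ker by blast
    qed
    have sub: "set (cols (B w)) \<subseteq> set (cols (A w))"
      using js carr[of w] unfolding colsB by (auto simp: cols_def)
    have "card (set (cols (B w))) = R" using distinct_card[OF dist] Bc[of w] by simp
    then show ?thesis using rank_ge_card_indpt[OF carr sub indpt] rk RS by simp
  qed
  show ?thesis using pfF F0 Fw by blast
qed



lemma pf_pool: "pf (\<lambda>w. cac_pool M r nloc pw w rep l wi g)"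
proof (induction l arbitrary: wi g)
  case 0
  show ?case by (simp, intro pf_prod pf_sum pf_mult pf_const pf_var)
next
  case (Suc l)
  show ?case by (simp, intro pf_prod pf_sum pf_mult pf_var Suc)
qed

lemma pf_coeff: "pf (\<lambda>w. coeff_tensor M L r nloc pw w d)"
  unfolding coeff_tensor_def cac_output_def by (intro pf_sum pf_mult pf_var pf_pool)

lemma finite_widx: "finite (cac_weight_idx M L r)"
proof -
  have "cac_weight_idx M L r = (SIGMA l:{..<L}. SIGMA g:{..<r l}. {..<cac_din M r l}) \<union> ({L} \<times> {0} \<times> {..<r (L - 1)})"
    unfolding cac_weight_idx_def by auto
  then show ?thesis by simp
qed


theorem claim2:
  fixes N M L :: nat and r nloc :: "nat \<Rightarrow> nat" and pw :: "nat \<Rightarrow> nat \<Rightarrow> nat"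
    and I J :: "nat set"
  assumes "L \<ge> 1"
    and "nloc 0 = N" and "nloc L = 1"
    and "\<forall>l<L. pw l ` {..<nloc l} = {..<nloc (Suc l)}"
    and "I \<union> J = {..<N}" and "I \<inter> J = {}"
  shows "AE w in PiM (cac_weight_idx M L r) (\<lambda>_. lborel).
           \<forall>w' \<in> space (PiM (cac_weight_idx M L r) (\<lambda>_. lborel)).
             real_mat_rank (matricize M I J (coeff_tensor M L r nloc pw w'))
             \<le> real_mat_rank (matricize M I J (coeff_tensor M L r nloc pw w))"
proof -
  define S where "S = cac_weight_idx M L r"
  define P where "P = PiM S (\<lambda>_. lborel :: real measure)"
  define W where "W = space P"
  define A where "A w = matricize M I J (coeff_tensor M L r nloc pw w)" for w
  define n where "n = M ^ card I"
  define nc where "nc = M ^ card J"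
  have carr: "A w \<in> carrier_mat n nc" for w unfolding A_def matricize_def n_def nc_def by simp
  have ent: "pf (\<lambda>w. A w $$ (i,j))" if "i < n" "j < nc" for i j
    using that unfolding A_def matricize_def n_def nc_def by (simp add: pf_coeff)
  define rk where "rk w = vec_space.rank n (A w)" for w
  have rkeq: "real_mat_rank (A w) = rk w" for w
    unfolding real_mat_rank_def rk_def using carr[of w] by simp
  have rkle: "rk w \<le> nc" for w unfolding rk_def by (rule vec_space.rank_le_nc[OF carr])
  have Wne: "W \<noteq> {}" unfolding W_def P_def space_PiM_empty_iff by simp
  define Rm where "Rm = Max (rk ` W)"
  have sub: "rk ` W \<subseteq> {..nc}" using rkle by (simp add: image_subset_iff)
  have fin: "finite (rk ` W)" using sub finite_subset by blast
  have "Rm \<in> rk ` W" using Max_in[OF fin] Wne unfolding Rm_def by blast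
  then obtain w0 where w0: "w0 \<in> W" "rk w0 = Rm" by (metis imageE)
  have maxle: "rk w' \<le> Rm" if "w' \<in> W" for w' using Max_ge[OF fin] that unfolding Rm_def by auto
  obtain F where F: "pf F" "F w0 \<noteq> 0" "\<And>w. F w \<noteq> 0 \<Longrightarrow> rk w0 \<le> rk w"
    using rank_witness[OF carr ent, of w0] unfolding rk_def by blast
  have Z: "{x \<in> W. F x = 0} \<in> null_sets P"
    using pf_zero_null[OF finite_widx F(1), of w0] F(2) w0(1) unfolding W_def P_def S_def by blast
  have "AE w in P. \<forall>w' \<in> W. rk w' \<le> rk w"
  proof (rule AE_I'[OF Z])
    show "{w \<in> space P. \<not> (\<forall>w'\<in>W. rk w' \<le> rk w)} \<subseteq> {x \<in> W. F x = 0}"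
    proof
      fix w assume wA: "w \<in> {w \<in> space P. \<not> (\<forall>w'\<in>W. rk w' \<le> rk w)}"
      have "F w = 0"
      proof (rule ccontr)
        assume "F w \<noteq> 0"
        then have "Rm \<le> rk w" using F(3) w0 by simp
        moreover from wA obtain w' where "w' \<in> W" "\<not> rk w' \<le> rk w" by blast
        ultimately show False using maxle by (meson order_trans)
      qed
      then show "w \<in> {x \<in> W. F x = 0}" using wA unfolding W_def by simp
    qed
  qed
  then show ?thesis unfolding P_def W_def S_def rkeq[symmetric] A_def .
qed


end
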